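(* Let $(X,Y,\phi)$ be an $L$-context and $X'\subseteq X$, $Y'\subseteq Y$. Then $(X',Y',\phi_{X',Y'})$ is a reduct of $(X,Y,\phi)$ in RST if and only if both $X\setminus X'$ and $Y\setminus Y'$ are $\phi$-reducible in RST.
   Context: $L=(L,* )$ is a complete residuated lattice: a complete lattice with bottom $0$ and top $1$, equipped with a commutative associative operation $*$ with unit $1$ satisfying $a*\bigvee_i b_i=\bigvee_i a*b_i$; $\to$ is its residuum ($a*b\le c\iff a\le b\to c$). An $L$-context is a triple $(X,Y,\phi)$ with $X,Y$ sets and $\phi\colon X\times Y\to L$. $L^X$ is the set of maps $X\to L$ with $L$-order $L^X(\mu,\mu')=\bigwedge_{x}(\mu(x)\to\mu'(x))$. $(\phi^\exists\mu)(y)=\bigvee_{x\in X}\mu(x)*\phi(x,y)$, $(\phi^\forall\lambda)(x)=\bigwedge_{y\in Y}(\phi(x,y)\to\lambda(y))$. $\mathcal{K}\phi=\{\mu\in L^X\mid\phi^\forall\phi^\exists\mu=\mu\}$ with the inherited $L$-order. $\phi_{X',Y'}$ is the restriction of $\phi$ to $X'\times Y'$; $\mu_{X'}$ the restriction of $\mu$ to $X'$; $\underline{\mu'}\in L^X$ the extension of $\mu'\in L^{X'}$ by $0$. An isomorphism of complete $L$-lattices is an $L$-isometric bijection. Reduct in RST: $(X',Y',\phi_{X',Y'})$ is a reduct of $(X,Y,\phi)$ in RST if the map $S_1\colon\mathcal{K}\phi\to\mathcal{K}\phi_{X',Y'}$, $S_1\mu=(\phi_{X',Y'})^\forall(\phi_{X',Y'})^\exists\mu_{X'}$,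 is an isomorphism of complete $L$-lattices; equivalently (by a theorem of the paper) any one of $S_2\mu=((\phi_{X,Y'})^\forall(\phi_{X,Y'})^\exists\mu)_{X'}$, $F_1\mu'=\phi^\forall\phi^\exists\underline{\mu'}$, $F_2\mu'=(\phi_{X,Y'})^\forall(\phi_{X,Y'})^\exists\underline{\mu'}$ (between $\mathcal{K}\phi$ and $\mathcal{K}\phi_{X',Y'}$) is an isomorphism. $\phi$-reducibility in RST: $X\setminus X'$ is $\phi$-reducible in RST if for every $\mu\in L^X$ there is $\mu'\in L^{X'}$ with $\phi^\exists\mu=(\phi_{X',Y})^\exists\mu'$; $Y\setminus Y'$ is $\phi$-reducible in RST if for every $\lambda\in L^Y$ there is $\lambda'\in L^{Y'}$ with $\phi^\forall\lambda=(\phi_{X,Y'})^\forall\lambda'$. *)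

theory Defs
  imports Main
begin

definition complete_residuated_lattice ::
  "('l::complete_lattice \<Rightarrow> 'l \<Rightarrow> 'l) \<Rightarrow> ('l \<Rightarrow> 'l \<Rightarrow> 'l) \<Rightarrow> bool" where
  "complete_residuated_lattice mult res \<longleftrightarrow>
     (\<forall>a b c. mult (mult a b) c = mult a (mult b c)) \<and>
     (\<forall>a b. mult a b = mult b a) \<and>
     (\<forall>a. mult a top = a) \<and>
     (\<forall>a B. mult a (Sup B) = Sup (mult a ` B)) \<and>
     (\<forall>a b c. mult a b \<le> c \<longleftrightarrow> a \<le> res b c)"

text \<open>L^X, represented extensionally: maps that are bot (=0) outside X.
  With this representation, restriction to X' is zero-extension outside X',
  and extension by 0 from X' to X is the identity on representatives.\<close>
definition Lfun :: "'x set \<Rightarrow> ('x \<Rightarrow> 'l::complete_lattice) set" where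
  "Lfun X = {\<mu>. \<forall>x. x \<notin> X \<longrightarrow> \<mu> x = bot}"

definition restr :: "'x set \<Rightarrow> ('x \<Rightarrow> 'l::complete_lattice) \<Rightarrow> 'x \<Rightarrow> 'l" where
  "restr X' \<mu> = (\<lambda>x. if x \<in> X' then \<mu> x else bot)"

definition Lord :: "('l \<Rightarrow> 'l \<Rightarrow> 'l) \<Rightarrow> 'x set \<Rightarrow> ('x \<Rightarrow> 'l::complete_lattice) \<Rightarrow> ('x \<Rightarrow> 'l) \<Rightarrow> 'l" where
  "Lord res X \<mu> \<mu>' = (INF x\<in>X. res (\<mu> x) (\<mu>' x))"

definition up :: "('l \<Rightarrow> 'l \<Rightarrow> 'l) \<Rightarrow> 'x set \<Rightarrow> 'y set \<Rightarrow> ('x \<Rightarrow> 'y \<Rightarrow> 'l::complete_lattice)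
    \<Rightarrow> ('x \<Rightarrow> 'l) \<Rightarrow> 'y \<Rightarrow> 'l" where
  "up mult X Y \<phi> \<mu> = (\<lambda>y. if y \<in> Y then (SUP x\<in>X. mult (\<mu> x) (\<phi> x y)) else bot)"

definition down :: "('l \<Rightarrow> 'l \<Rightarrow> 'l) \<Rightarrow> 'x set \<Rightarrow> 'y set \<Rightarrow> ('x \<Rightarrow> 'y \<Rightarrow> 'l::complete_lattice)
    \<Rightarrow> ('y \<Rightarrow> 'l) \<Rightarrow> 'x \<Rightarrow> 'l" where
  "down res X Y \<phi> \<kappa> = (\<lambda>x. if x \<in> X then (INF y\<in>Y. res (\<phi> x y) (\<kappa> y)) else bot)"

definition Kset :: "('l \<Rightarrow> 'l \<Rightarrow> 'l) \<Rightarrow> ('l \<Rightarrow> 'l \<Rightarrow> 'l) \<Rightarrow> 'x set \<Rightarrow> 'y set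
    \<Rightarrow> ('x \<Rightarrow> 'y \<Rightarrow> 'l::complete_lattice) \<Rightarrow> ('x \<Rightarrow> 'l) set" where
  "Kset mult res X Y \<phi> = {\<mu> \<in> Lfun X. down res X Y \<phi> (up mult X Y \<phi> \<mu>) = \<mu>}"

definition L_iso :: "('l \<Rightarrow> 'l \<Rightarrow> 'l) \<Rightarrow> 'x set \<Rightarrow> 'x set \<Rightarrow> ('x \<Rightarrow> 'l::complete_lattice) set
    \<Rightarrow> ('x \<Rightarrow> 'l) set \<Rightarrow> (('x \<Rightarrow> 'l) \<Rightarrow> ('x \<Rightarrow> 'l)) \<Rightarrow> bool" where
  "L_iso res X X' A B f \<longleftrightarrow> bij_betw f A B \<and>
     (\<forall>\<mu>\<in>A. \<forall>\<mu>'\<in>A. Lord res X' (f \<mu>) (f \<mu>') = Lord res X \<mu> \<mu>')"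

definition reduct_RST :: "('l \<Rightarrow> 'l \<Rightarrow> 'l) \<Rightarrow> ('l \<Rightarrow> 'l \<Rightarrow> 'l) \<Rightarrow> 'x set \<Rightarrow> 'y set
    \<Rightarrow> ('x \<Rightarrow> 'y \<Rightarrow> 'l::complete_lattice) \<Rightarrow> 'x set \<Rightarrow> 'y set \<Rightarrow> bool" where
  "reduct_RST mult res X Y \<phi> X' Y' \<longleftrightarrow>
     L_iso res X X' (Kset mult res X Y \<phi>) (Kset mult res X' Y' \<phi>)
       (\<lambda>\<mu>. down res X' Y' \<phi> (up mult X' Y' \<phi> (restr X' \<mu>)))"

definition X_reducible_RST :: "('l \<Rightarrow> 'l \<Rightarrow> 'l) \<Rightarrow> 'x set \<Rightarrow> 'y set
    \<Rightarrow> ('x \<Rightarrow> 'y \<Rightarrow> 'l::complete_lattice) \<Rightarrow> 'x set \<Rightarrow> bool" where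
  "X_reducible_RST mult X Y \<phi> X' \<longleftrightarrow>
     (\<forall>\<mu>\<in>Lfun X. \<exists>\<mu>'\<in>Lfun X'. up mult X Y \<phi> \<mu> = up mult X' Y \<phi> \<mu>')"

definition Y_reducible_RST :: "('l \<Rightarrow> 'l \<Rightarrow> 'l) \<Rightarrow> 'x set \<Rightarrow> 'y set
    \<Rightarrow> ('x \<Rightarrow> 'y \<Rightarrow> 'l::complete_lattice) \<Rightarrow> 'y set \<Rightarrow> bool" where
  "Y_reducible_RST res X Y \<phi> Y' \<longleftrightarrow>
     (\<forall>\<kappa>\<in>Lfun Y. \<exists>\<kappa>'\<in>Lfun Y'. down res X Y \<phi> \<kappa> = down res X Y' \<phi> \<kappa>')"

end

theory Submission
  imports Defs
begin

locale crl =
  fixes mult res :: "'l::complete_lattice \<Rightarrow> 'l \<Rightarrow> 'l"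
  assumes crl: "complete_residuated_lattice mult res"
begin

lemma res_iff: "mult a b \<le> c \<longleftrightarrow> a \<le> res b c"
  using crl unfolding complete_residuated_lattice_def by blast

lemma comm: "mult a b = mult b a"
  using crl unfolding complete_residuated_lattice_def by blast

lemma assoc: "mult (mult a b) c = mult a (mult b c)"
  using crl unfolding complete_residuated_lattice_def by blast

lemma mult_Sup: "mult a (Sup B) = Sup (mult a ` B)"
  using crl unfolding complete_residuated_lattice_def by blast

lemma mult_SUP: "mult a (SUP i\<in>I. f i) = (SUP i\<in>I. mult a (f i))"
  using mult_Sup[of a "f ` I"] by (simp add: image_image)

lemma mult_bot: "mult a bot = bot"
  using mult_Sup[of a "{}"] by simp

lemma mult_bot_left: "mult bot a = bot"
  using mult_bot[of a] comm[of bot a] by simp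

lemma mult_mono: "b \<le> c \<Longrightarrow> mult a b \<le> mult a c"
proof -
  assume "b \<le> c"
  then have "Sup {b, c} = c" by (simp add: sup_absorb2)
  then have "mult a c = Sup {mult a b, mult a c}" using mult_Sup[of a "{b,c}"] by simp
  then show ?thesis by (metis Sup_upper insertI1)
qed

lemma mult_mono_left: "b \<le> c \<Longrightarrow> mult b a \<le> mult c a"
  using mult_mono[of b c a] comm[of b a] comm[of c a] by simp

lemma res_top: "res a top = top"
  using res_iff[of top a top] by (simp add: top_unique)

lemma up_Lfun: "up mult X Y \<phi> \<mu> \<in> Lfun Y"
  by (simp add: Lfun_def up_def)

lemma down_Lfun: "down res X Y \<phi> \<kappa> \<in> Lfun X"
  by (simp add: Lfun_def down_def)

lemma galois:
  "(\<forall>x\<in>X. \<mu> x \<le> down res X Y \<phi> \<kappa> x) \<longleftrightarrow> (\<forall>y\<in>Y. up mult X Y \<phi> \<mu> y \<le> \<kappa> y)"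
proof -
  have "(\<forall>x\<in>X. \<mu> x \<le> down res X Y \<phi> \<kappa> x) \<longleftrightarrow> (\<forall>x\<in>X. \<forall>y\<in>Y. mult (\<mu> x) (\<phi> x y) \<le> \<kappa> y)"
    by (auto simp: down_def le_INF_iff res_iff)
  also have "\<dots> \<longleftrightarrow> (\<forall>y\<in>Y. up mult X Y \<phi> \<mu> y \<le> \<kappa> y)"
    by (auto simp: up_def SUP_le_iff)
  finally show ?thesis .
qed

lemma extensive: "\<forall>x\<in>X. \<mu> x \<le> down res X Y \<phi> (up mult X Y \<phi> \<mu>) x"
  using galois[where \<kappa>="up mult X Y \<phi> \<mu>" and X=X and Y=Y and \<mu>=\<mu> and \<phi>=\<phi>] by simp

lemma extensive_fun: "\<mu> \<in> Lfun X \<Longrightarrow> \<mu> \<le> down res X Y \<phi> (up mult X Y \<phi> \<mu>)"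
  unfolding le_fun_def
proof
  fix x assume L: "\<mu> \<in> Lfun X"
  show "\<mu> x \<le> down res X Y \<phi> (up mult X Y \<phi> \<mu>) x"
  proof (cases "x \<in> X")
    case True then show ?thesis by (rule extensive[rule_format])
  next
    case False then show ?thesis using L by (simp add: Lfun_def)
  qed
qed

lemma counit: "\<forall>y\<in>Y. up mult X Y \<phi> (down res X Y \<phi> \<kappa>) y \<le> \<kappa> y"
  using galois[where \<mu>="down res X Y \<phi> \<kappa>" and X=X and Y=Y and \<kappa>=\<kappa> and \<phi>=\<phi>] by simp

lemma up_mono: "(\<forall>x\<in>X. \<mu> x \<le> \<nu> x) \<Longrightarrow> up mult X Y \<phi> \<mu> \<le> up mult X Y \<phi> \<nu>"
proof -
  assume a: "\<forall>x\<in>X. \<mu> x \<le> \<nu> x"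
  have "(SUP x\<in>X. mult (\<mu> x) (\<phi> x y)) \<le> (SUP x\<in>X. mult (\<nu> x) (\<phi> x y))" for y
    by (rule SUP_mono) (use a mult_mono_left in blast)
  then show ?thesis unfolding up_def le_fun_def by simp
qed

lemma down_mono: "(\<forall>y\<in>Y. \<kappa> y \<le> \<kappa>' y) \<Longrightarrow> down res X Y \<phi> \<kappa> \<le> down res X Y \<phi> \<kappa>'"
proof -
  assume a: "\<forall>y\<in>Y. \<kappa> y \<le> \<kappa>' y"
  have "\<forall>x\<in>X. down res X Y \<phi> \<kappa> x \<le> down res X Y \<phi> \<kappa>' x"
  proof -
    have "\<forall>y\<in>Y. up mult X Y \<phi> (down res X Y \<phi> \<kappa>) y \<le> \<kappa>' y"
    proof
      fix y assume y: "y \<in> Y"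
      have "up mult X Y \<phi> (down res X Y \<phi> \<kappa>) y \<le> \<kappa> y" using y by (rule counit[rule_format])
      also have "\<dots> \<le> \<kappa>' y" using a y by blast
      finally show "up mult X Y \<phi> (down res X Y \<phi> \<kappa>) y \<le> \<kappa>' y" .
    qed
    then show ?thesis by (subst galois)
  qed
  then show ?thesis unfolding le_fun_def by (simp add: down_def)
qed

lemma dud: "down res X Y \<phi> (up mult X Y \<phi> (down res X Y \<phi> \<kappa>)) = down res X Y \<phi> \<kappa>"
proof (rule antisym)
  show "down res X Y \<phi> (up mult X Y \<phi> (down res X Y \<phi> \<kappa>)) \<le> down res X Y \<phi> \<kappa>"
    by (rule down_mono) (rule counit)
  show "down res X Y \<phi> \<kappa> \<le> down res X Y \<phi> (up mult X Y \<phi> (down res X Y \<phi> \<kappa>))"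
    by (rule extensive_fun) (rule down_Lfun)
qed

lemma udu: "up mult X Y \<phi> (down res X Y \<phi> (up mult X Y \<phi> \<mu>)) = up mult X Y \<phi> \<mu>"
proof (rule antisym)
  show "up mult X Y \<phi> (down res X Y \<phi> (up mult X Y \<phi> \<mu>)) \<le> up mult X Y \<phi> \<mu>"
    unfolding le_fun_def
  proof
    fix y
    show "up mult X Y \<phi> (down res X Y \<phi> (up mult X Y \<phi> \<mu>)) y \<le> up mult X Y \<phi> \<mu> y"
    proof (cases "y \<in> Y")
      case True then show ?thesis by (rule counit[rule_format])
    next
      case False then show ?thesis by (simp add: up_def)
    qed
  qed
  show "up mult X Y \<phi> \<mu> \<le> up mult X Y \<phi> (down res X Y \<phi> (up mult X Y \<phi> \<mu>))"
    by (rule up_mono) (rule extensive)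
qed

lemma down_in_K: "down res X Y \<phi> \<kappa> \<in> Kset mult res X Y \<phi>"
  by (simp add: Kset_def dud down_Lfun)

lemma restr_up: "Y' \<subseteq> Y \<Longrightarrow> restr Y' (up mult X Y \<phi> \<mu>) = up mult X Y' \<phi> \<mu>"
  unfolding restr_def up_def by (rule ext) auto

lemma restr_down: "X' \<subseteq> X \<Longrightarrow> restr X' (down res X Y \<phi> \<kappa>) = down res X' Y \<phi> \<kappa>"
  unfolding restr_def down_def by (rule ext) auto

lemma up_ext:
  assumes "\<nu> \<in> Lfun X'" "X' \<subseteq> X"
  shows "up mult X Y \<phi> \<nu> = up mult X' Y \<phi> \<nu>"
proof -
  have eq: "(SUP x\<in>X. mult (\<nu> x) (\<phi> x y)) = (SUP x\<in>X'. mult (\<nu> x) (\<phi> x y))" for y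
  proof (rule antisym)
    show "(SUP x\<in>X. mult (\<nu> x) (\<phi> x y)) \<le> (SUP x\<in>X'. mult (\<nu> x) (\<phi> x y))"
    proof (rule SUP_least)
      fix x assume "x \<in> X"
      show "mult (\<nu> x) (\<phi> x y) \<le> (SUP x\<in>X'. mult (\<nu> x) (\<phi> x y))"
      proof (cases "x \<in> X'")
        case True then show ?thesis by (rule SUP_upper)
      next
        case False then have "\<nu> x = bot" using assms(1) by (simp add: Lfun_def)
        then show ?thesis by (simp add: mult_bot_left)
      qed
    qed
    show "(SUP x\<in>X'. mult (\<nu> x) (\<phi> x y)) \<le> (SUP x\<in>X. mult (\<nu> x) (\<phi> x y))"
      using assms(2) by (rule SUP_subset_mono) simp
  qed
  show ?thesis unfolding up_def eq ..
qed

lemma down_ext: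
  assumes "Y' \<subseteq> Y"
  shows "down res X Y' \<phi> \<kappa> = down res X Y \<phi> (\<lambda>y. if y \<in> Y' then \<kappa> y else top)"
proof -
  have "(INF y\<in>Y'. res (\<phi> x y) (\<kappa> y)) = (INF y\<in>Y. res (\<phi> x y) (if y \<in> Y' then \<kappa> y else top))" for x
  proof (rule antisym)
    show "(INF y\<in>Y'. res (\<phi> x y) (\<kappa> y)) \<le> (INF y\<in>Y. res (\<phi> x y) (if y \<in> Y' then \<kappa> y else top))"
      by (rule INF_greatest) (auto simp: res_top intro: INF_lower)
    show "(INF y\<in>Y. res (\<phi> x y) (if y \<in> Y' then \<kappa> y else top)) \<le> (INF y\<in>Y'. res (\<phi> x y) (\<kappa> y))"
    proof (rule INF_greatest)
      fix y assume y: "y \<in> Y'"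
      then have "y \<in> Y" using assms by blast
      then have "(INF y\<in>Y. res (\<phi> x y) (if y \<in> Y' then \<kappa> y else top)) \<le> res (\<phi> x y) (if y \<in> Y' then \<kappa> y else top)"
        by (rule INF_lower)
      then show "(INF y\<in>Y. res (\<phi> x y) (if y \<in> Y' then \<kappa> y else top)) \<le> res (\<phi> x y) (\<kappa> y)"
        using y by simp
    qed
  qed
  then show ?thesis unfolding down_def by (intro ext) simp
qed

lemma downY'_in_K: "Y' \<subseteq> Y \<Longrightarrow> down res X Y' \<phi> \<kappa> \<in> Kset mult res X Y \<phi>"
proof -
  assume a: "Y' \<subseteq> Y"
  have "down res X Y' \<phi> \<kappa> = down res X Y \<phi> (\<lambda>y. if y \<in> Y' then \<kappa> y else top)"
    by (rule down_ext[OF a])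
  then show ?thesis by (simp add: down_in_K)
qed

end

theorem mainTheorem6:
  fixes mult res :: "'l::complete_lattice \<Rightarrow> 'l \<Rightarrow> 'l"
    and X X' :: "'x set" and Y Y' :: "'y set" and \<phi> :: "'x \<Rightarrow> 'y \<Rightarrow> 'l"
  assumes "complete_residuated_lattice mult res"
    and "X' \<subseteq> X" and "Y' \<subseteq> Y"
  shows "reduct_RST mult res X Y \<phi> X' Y' \<longleftrightarrow>
         X_reducible_RST mult X Y \<phi> X' \<and> Y_reducible_RST res X Y \<phi> Y'"
proof -
  interpret crl mult res by standard (rule assms(1))
  note XX = assms(2) and YY = assms(3)
  define K where "K = Kset mult res X Y \<phi>"
  define KA where "KA = Kset mult res X' Y' \<phi>"
  define S where "S = (\<lambda>\<mu>. down res X' Y' \<phi> (up mult X' Y' \<phi> (restr X' \<mu>)))"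
  have KD: "\<mu> \<in> K \<Longrightarrow> \<mu> \<in> Lfun X \<and> down res X Y \<phi> (up mult X Y \<phi> \<mu>) = \<mu>" for \<mu>
    by (simp add: K_def Kset_def)
  have KAD: "\<nu> \<in> KA \<Longrightarrow> \<nu> \<in> Lfun X' \<and> down res X' Y' \<phi> (up mult X' Y' \<phi> \<nu>) = \<nu>" for \<nu>
    by (simp add: KA_def Kset_def)
  have SKA: "S \<mu> \<in> KA" for \<mu> unfolding S_def KA_def by (rule down_in_K)
  have F1: "S \<mu> = restr X' \<mu>" if "\<mu> = down res X Y' \<phi> lam" for \<mu> lam
  proof -
    have r: "restr X' \<mu> = down res X' Y' \<phi> lam" unfolding that by (rule restr_down[OF XX])
    show ?thesis unfolding S_def r by (rule dud)
  qed
  have HK: "down res X Y' \<phi> \<kappa> \<in> K" for \<kappa> unfolding K_def using YY by (rule downY'_in_K)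
  have SH: "S (down res X Y' \<phi> (up mult X' Y' \<phi> \<nu>)) = \<nu>" if "\<nu> \<in> KA" for \<nu>
  proof -
    have "S (down res X Y' \<phi> (up mult X' Y' \<phi> \<nu>)) = restr X' (down res X Y' \<phi> (up mult X' Y' \<phi> \<nu>))"
      by (rule F1) (rule refl)
    also have "\<dots> = down res X' Y' \<phi> (up mult X' Y' \<phi> \<nu>)" by (rule restr_down[OF XX])
    also have "\<dots> = \<nu>" using KAD[OF that] by simp
    finally show ?thesis .
  qed
  show ?thesis
  proof
    assume red: "reduct_RST mult res X Y \<phi> X' Y'"
    then have bij: "bij_betw S K KA"
      unfolding reduct_RST_def L_iso_def S_def K_def KA_def by (rule conjunct1)
    have inj: "\<mu>1 \<in> K \<Longrightarrow> \<mu>2 \<in> K \<Longrightarrow> S \<mu>1 = S \<mu>2 \<Longrightarrow> \<mu>1 = \<mu>2" for \<mu>1 \<mu>2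
      using bij unfolding bij_betw_def inj_on_def by blast
    have Hmu: "\<mu> = down res X Y' \<phi> (up mult X' Y' \<phi> (S \<mu>))" if "\<mu> \<in> K" for \<mu>
      by (rule inj[OF that HK]) (rule SH[OF SKA, symmetric])
    have Yr: "Y_reducible_RST res X Y \<phi> Y'"
      unfolding Y_reducible_RST_def
    proof
      fix \<kappa> :: "'y \<Rightarrow> 'l" assume "\<kappa> \<in> Lfun Y"
      have "down res X Y \<phi> \<kappa> \<in> K" unfolding K_def by (rule down_in_K)
      then have "down res X Y \<phi> \<kappa> = down res X Y' \<phi> (up mult X' Y' \<phi> (S (down res X Y \<phi> \<kappa>)))"
        by (rule Hmu)
      then show "\<exists>\<kappa>'\<in>Lfun Y'. down res X Y \<phi> \<kappa> = down res X Y' \<phi> \<kappa>'"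
        using up_Lfun by (rule rev_bexI[rotated])
    qed
    have Xr: "X_reducible_RST mult X Y \<phi> X'"
      unfolding X_reducible_RST_def
    proof
      fix \<mu> :: "'x \<Rightarrow> 'l" assume "\<mu> \<in> Lfun X"
      define m where "m = down res X Y \<phi> (up mult X Y \<phi> \<mu>)"
      have mK: "m \<in> K" unfolding m_def K_def by (rule down_in_K)
      have um: "up mult X Y \<phi> m = up mult X Y \<phi> \<mu>" unfolding m_def by (rule udu)
      define m0 where "m0 = down res X Y \<phi> (up mult X Y \<phi> (restr X' m))"
      have m0K: "m0 \<in> K" unfolding m0_def K_def by (rule down_in_K)
      have Sm: "S m = restr X' m" by (rule F1[OF Hmu[OF mK]])
      have Sm0: "S m0 = restr X' m0" by (rule F1[OF Hmu[OF m0K]])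
      have le1: "m0 \<le> m"
      proof -
        have "\<forall>x\<in>X. restr X' m x \<le> m x" by (simp add: restr_def)
        then have "up mult X Y \<phi> (restr X' m) \<le> up mult X Y \<phi> m" by (rule up_mono)
        then have "m0 \<le> down res X Y \<phi> (up mult X Y \<phi> m)"
          unfolding m0_def by (intro down_mono) (simp add: le_fun_def)
        then show ?thesis using KD[OF mK] by simp
      qed
      have le2: "\<forall>x\<in>X. restr X' m x \<le> m0 x" unfolding m0_def by (rule extensive)
      have "restr X' m0 = restr X' m"
      proof
        fix x show "restr X' m0 x = restr X' m x"
        proof (cases "x \<in> X'")
          case True
          then have "x \<in> X" using XX by blast
          then have "restr X' m x \<le> m0 x" using le2 by blast
          then have "m x \<le> m0 x" using True by (simp add: restr_def)
          moreover have "m0 x \<le> m x" using le1 by (simp add: le_fun_def)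
          ultimately show ?thesis using True by (simp add: restr_def)
        next
          case False then show ?thesis by (simp add: restr_def)
        qed
      qed
      then have "m0 = m" using inj[OF m0K mK] Sm Sm0 by simp
      then have "up mult X Y \<phi> \<mu> = up mult X Y \<phi> m0" using um by simp
      also have "\<dots> = up mult X Y \<phi> (restr X' m)" unfolding m0_def by (rule udu)
      also have "\<dots> = up mult X' Y \<phi> (restr X' m)"
        by (rule up_ext) (auto simp: Lfun_def restr_def XX)
      finally have eqf: "up mult X Y \<phi> \<mu> = up mult X' Y \<phi> (restr X' m)" .
      have rl: "restr X' m \<in> Lfun X'" by (simp add: Lfun_def restr_def)
      show "\<exists>\<mu>'\<in>Lfun X'. up mult X Y \<phi> \<mu> = up mult X' Y \<phi> \<mu>'"
        using rl eqf by blast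
    qed
    show "X_reducible_RST mult X Y \<phi> X' \<and> Y_reducible_RST res X Y \<phi> Y'"
      using Xr Yr by blast
  next
    assume "X_reducible_RST mult X Y \<phi> X' \<and> Y_reducible_RST res X Y \<phi> Y'"
    then have Xr: "X_reducible_RST mult X Y \<phi> X'" and Yr: "Y_reducible_RST res X Y \<phi> Y'"
      by auto
    have P: "\<exists>lam. \<mu> = down res X Y' \<phi> lam" if "\<mu> \<in> K" for \<mu>
    proof -
      have "\<exists>\<kappa>'\<in>Lfun Y'. down res X Y \<phi> (up mult X Y \<phi> \<mu>) = down res X Y' \<phi> \<kappa>'"
        using Yr unfolding Y_reducible_RST_def using up_Lfun by (rule bspec)
      then obtain \<kappa>' where k: "down res X Y \<phi> (up mult X Y \<phi> \<mu>) = down res X Y' \<phi> \<kappa>'"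
        by blast
      have "\<mu> = down res X Y' \<phi> \<kappa>'" using KD[OF that] k by simp
      then show ?thesis by blast
    qed
    have SR: "S \<mu> = restr X' \<mu>" if "\<mu> \<in> K" for \<mu>
      using P[OF that] F1 by (elim exE)
    have Q: "up mult X Y \<phi> \<mu> = up mult X' Y \<phi> (restr X' \<mu>)" if "\<mu> \<in> K" for \<mu>
    proof -
      have "\<exists>\<nu>\<in>Lfun X'. up mult X Y \<phi> \<mu> = up mult X' Y \<phi> \<nu>"
        using Xr unfolding X_reducible_RST_def using conjunct1[OF KD[OF that]] by (rule bspec)
      then obtain \<nu> where \<nu>: "\<nu> \<in> Lfun X'" "up mult X Y \<phi> \<mu> = up mult X' Y \<phi> \<nu>"
        by blast
      have e1: "up mult X Y \<phi> \<nu> = up mult X' Y \<phi> \<nu>" using \<nu>(1) XX by (rule up_ext)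
      have rL: "restr X' \<mu> \<in> Lfun X'" by (simp add: Lfun_def restr_def)
      have e2: "up mult X Y \<phi> (restr X' \<mu>) = up mult X' Y \<phi> (restr X' \<mu>)" using rL XX by (rule up_ext)
      have "\<forall>x\<in>X. \<nu> x \<le> down res X Y \<phi> (up mult X Y \<phi> \<nu>) x" by (rule extensive)
      moreover have "down res X Y \<phi> (up mult X Y \<phi> \<nu>) = \<mu>"
        using e1 \<nu>(2)[symmetric] conjunct2[OF KD[OF that]] by simp
      ultimately have "\<forall>x\<in>X. \<nu> x \<le> \<mu> x" by simp
      then have "\<forall>x\<in>X. \<nu> x \<le> restr X' \<mu> x" using \<nu>(1) by (auto simp: restr_def Lfun_def)
      then have a: "up mult X Y \<phi> \<nu> \<le> up mult X Y \<phi> (restr X' \<mu>)" by (rule up_mono)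
      have "\<forall>x\<in>X. restr X' \<mu> x \<le> \<mu> x" by (simp add: restr_def)
      then have b: "up mult X Y \<phi> (restr X' \<mu>) \<le> up mult X Y \<phi> \<mu>" by (rule up_mono)
      have "up mult X Y \<phi> \<mu> \<le> up mult X Y \<phi> (restr X' \<mu>)" using a e1 \<nu>(2) by simp
      then have "up mult X Y \<phi> \<mu> = up mult X Y \<phi> (restr X' \<mu>)" using b by (rule antisym)
      then show ?thesis using e2 by simp
    qed
    have Qy: "up mult X Y \<phi> \<mu> y = (SUP x\<in>X'. mult (\<mu> x) (\<phi> x y))" if "\<mu> \<in> K" "y \<in> Y" for \<mu> y
    proof -
      have "up mult X Y \<phi> \<mu> y = (SUP x\<in>X'. mult (restr X' \<mu> x) (\<phi> x y))"
        using Q[OF that(1)] that(2) by (simp add: up_def)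
      also have "\<dots> = (SUP x\<in>X'. mult (\<mu> x) (\<phi> x y))"
        by (rule SUP_cong) (auto simp: restr_def)
      finally show ?thesis .
    qed
    have injR: "\<mu>1 = \<mu>2" if "\<mu>1 \<in> K" "\<mu>2 \<in> K" "restr X' \<mu>1 = restr X' \<mu>2" for \<mu>1 \<mu>2
    proof -
      have "\<mu>1 = down res X Y \<phi> (up mult X' Y \<phi> (restr X' \<mu>1))" using KD[OF that(1)] Q[OF that(1)] by simp
      also have "\<dots> = down res X Y \<phi> (up mult X' Y \<phi> (restr X' \<mu>2))" using that(3) by simp
      also have "\<dots> = \<mu>2" using KD[OF that(2)] Q[OF that(2)] by simp
      finally show ?thesis .
    qed
    have bij: "bij_betw S K KA"
      unfolding bij_betw_def
    proof
      show "inj_on S K" unfolding inj_on_def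
      proof (intro ballI impI)
        fix a b assume "a \<in> K" "b \<in> K" "S a = S b"
        then show "a = b" using SR injR by simp
      qed
      show "S ` K = KA"
      proof
        show "S ` K \<subseteq> KA" using SKA by blast
        show "KA \<subseteq> S ` K"
        proof
          fix \<nu> assume "\<nu> \<in> KA"
          then have "\<nu> = S (down res X Y' \<phi> (up mult X' Y' \<phi> \<nu>))" using SH by simp
          then show "\<nu> \<in> S ` K" using HK by blast
        qed
      qed
    qed
    have iso: "Lord res X' (S \<mu>1) (S \<mu>2) = Lord res X \<mu>1 \<mu>2" if "\<mu>1 \<in> K" "\<mu>2 \<in> K" for \<mu>1 \<mu>2
    proof -
      have eq: "Lord res X' (S \<mu>1) (S \<mu>2) = (INF x\<in>X'. res (\<mu>1 x) (\<mu>2 x))"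
        unfolding Lord_def SR[OF that(1)] SR[OF that(2)]
        by (rule INF_cong) (auto simp: restr_def)
      define c where "c = (INF x\<in>X'. res (\<mu>1 x) (\<mu>2 x))"
      have cx: "mult c (\<mu>1 x) \<le> \<mu>2 x" if "x \<in> X'" for x
        unfolding res_iff c_def using that by (rule INF_lower)
      have "c \<le> res (\<mu>1 x) (\<mu>2 x)" if x: "x \<in> X" for x
      proof -
        have "\<forall>y\<in>Y. mult (mult c (\<mu>1 x)) (\<phi> x y) \<le> up mult X Y \<phi> \<mu>2 y"
        proof
          fix y assume y: "y \<in> Y"
          have "mult (mult c (\<mu>1 x)) (\<phi> x y) = mult c (mult (\<mu>1 x) (\<phi> x y))" by (rule assoc)
          also have "\<dots> \<le> mult c (up mult X Y \<phi> \<mu>1 y)"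
          proof (rule mult_mono)
            have "mult (\<mu>1 x) (\<phi> x y) \<le> (SUP x\<in>X. mult (\<mu>1 x) (\<phi> x y))"
              using x by (rule SUP_upper)
            then show "mult (\<mu>1 x) (\<phi> x y) \<le> up mult X Y \<phi> \<mu>1 y" using y by (simp add: up_def)
          qed
          also have "\<dots> = (SUP x\<in>X'. mult c (mult (\<mu>1 x) (\<phi> x y)))"
            using Qy[OF \<open>\<mu>1 \<in> K\<close> y] by (simp add: mult_SUP)
          also have "\<dots> \<le> (SUP x\<in>X'. mult (\<mu>2 x) (\<phi> x y))"
          proof (rule SUP_mono)
            fix n assume n: "n \<in> X'"
            have "mult c (mult (\<mu>1 n) (\<phi> n y)) \<le> mult (\<mu>2 n) (\<phi> n y)"
              using cx[OF n] by (simp add: assoc[symmetric] mult_mono_left)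
            then show "\<exists>m\<in>X'. mult c (mult (\<mu>1 n) (\<phi> n y)) \<le> mult (\<mu>2 m) (\<phi> m y)"
              using n by blast
          qed
          also have "\<dots> = up mult X Y \<phi> \<mu>2 y" using Qy[OF \<open>\<mu>2 \<in> K\<close> y] by simp
          finally show "mult (mult c (\<mu>1 x)) (\<phi> x y) \<le> up mult X Y \<phi> \<mu>2 y" .
        qed
        then have "mult c (\<mu>1 x) \<le> down res X Y \<phi> (up mult X Y \<phi> \<mu>2) x"
          using x by (simp add: down_def le_INF_iff res_iff)
        then have "mult c (\<mu>1 x) \<le> \<mu>2 x" using KD[OF \<open>\<mu>2 \<in> K\<close>] by simp
        then show ?thesis by (simp add: res_iff)
      qed
      then have ge: "c \<le> Lord res X \<mu>1 \<mu>2" unfolding Lord_def by (rule INF_greatest)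
      have le: "Lord res X \<mu>1 \<mu>2 \<le> c" unfolding Lord_def c_def using XX by (rule INF_superset_mono) simp
      have "Lord res X \<mu>1 \<mu>2 = c" using le ge by (rule antisym)
      then show ?thesis using eq c_def by simp
    qed
    show "reduct_RST mult res X Y \<phi> X' Y'"
      unfolding reduct_RST_def L_iso_def
      using bij iso unfolding S_def K_def KA_def by blast
  qed
qed

end
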